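(* In any two-player perfect-information game, let $U_s$ be the exact EPFs and $U'_s=\bigwedge_{s'\in\mathcal C(s)}(U_{s'}\triangleright\beta(s'))$ for non-leaf $s$ (with $U'_\ell=U_\ell$ for leaves). Let $\{\tilde U_s\}$ be learned EPFs and $\tilde U'_s$ their one-step lookahead targets, all as in the context. Then for every $s\in\mathcal S$, $$\mathrm{Dom}[U_s]=\mathrm{Dom}[U'_s]=\mathrm{Dom}[\tilde U_s]=\mathrm{Dom}[\tilde U'_s]=[\underline V(s),\overline V(s)],$$ where $\mathrm{Dom}[h]=\{\mu: h(\mu)>-\infty\}$.
   Context: A two-player perfect-information game is a finite rooted tree with states $\mathcal S$. Its leaves $\mathcal L$ carry payoffs $r_1(\ell),r_2(\ell)$ for the leader $\mathsf P_1$ and the follower $\mathsf P_2$. Non-leaf states are partitioned into leader states $\mathcal S_1$ and follower states $\mathcal S_2$, and $\mathcal C(s)$ denotes the children of $s$. Bounds, defined by backward induction: - $\underline V(\ell)=\overline V(\ell)=r_2(\ell)$ for leaves; - $\underline V(s)=\min_{s'}\underline V(s')$ for $s\in\mathcal S_1$; - $\underline V(s)=\max_{s'}\underline V(s')$ for $s\in\mathcal S_2$; - $\overline V(s)=\max_{s'}\overline V(s')$ for every non-leaf $s$. For $s\in\mathcal S_2$ and $s'\in\mathcal C(s)$, let $\tau(s')=\max_{s^!\in\mathcal C(s),s^!\ne s'}\underline V(s^!)$. Let $\beta(s')=\tau(s')$ if the parent of $s'$ is in $\mathcal S_2$, and $-\infty$ if it is in $\mathcal S_1$. Operators, for $g:\mathbb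 R\to\mathbb R\cup\{-\infty\}$: - $\bigwedge_i g_i$ is the pointwise infimum of all concave $h\ge\max_i g_i$; - $[g\triangleright t](\mu)=g(\mu)$ for $\mu\ge t$ and $-\infty$ otherwise. Exact EPFs: $U_\ell(\mu)=r_1(\ell)$ if $\mu=r_2(\ell)$ and $-\infty$ otherwise; $U_s=\bigwedge_{s'\in\mathcal C(s)}(U_{s'}\triangleright\beta(s'))$. Learned EPFs: $\tilde U_\ell=U_\ell$ for leaves. For non-leaf $s$, $\tilde U_s$ is the piecewise linear interpolation of finitely many points with $x$-coordinates in $[\underline V(s),\overline V(s)]$ including both endpoints. It is real-valued on that interval and $-\infty$ outside. Targets: $\tilde U'_s=\bigwedge_{s'\in\mathcal C(s)}(\tilde U_{s'}\triangleright\beta(s'))$ for non-leaf $s$, and $\tilde U'_\ell=\tilde U_\ell$. *)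

theory Defs
  imports "HOL-Analysis.Analysis" "HOL-Library.Extended_Real"
begin

datatype player = Leader | Follower

text \<open>A game tree: a leaf carries payoffs (r1, r2) for leader and follower;
  a non-leaf state belongs to a player and has an ordered list of children.
  States of the game are positions (paths of child indices) in the tree,
  so distinct children are distinct states even if their subtrees coincide.\<close>
datatype gtree = Leaf real real | Node player "gtree list"

fun wf_tree :: "gtree \<Rightarrow> bool" where
  "wf_tree (Leaf _ _) = True"
| "wf_tree (Node p cs) = (cs \<noteq> [] \<and> (\<forall>c\<in>set cs. wf_tree c))"

fun is_leaf :: "gtree \<Rightarrow> bool" where
  "is_leaf (Leaf _ _) = True"
| "is_leaf (Node _ _) = False"

fun subtree :: "gtree \<Rightarrow> nat list \<Rightarrow> gtree option" where
  "subtree t [] = Some t"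
| "subtree (Leaf _ _) (i # q) = None"
| "subtree (Node p cs) (i # q) = (if i < length cs then subtree (cs ! i) q else None)"

definition positions :: "gtree \<Rightarrow> nat list set" where
  "positions t = {q. subtree t q \<noteq> None}"

fun Vlo :: "gtree \<Rightarrow> real" where
  "Vlo (Leaf r1 r2) = r2"
| "Vlo (Node Leader cs) = Min (set (map Vlo cs))"
| "Vlo (Node Follower cs) = Max (set (map Vlo cs))"

fun Vhi :: "gtree \<Rightarrow> real" where
  "Vhi (Leaf r1 r2) = r2"
| "Vhi (Node p cs) = Max (set (map Vhi cs))"

text \<open>tau for child i of a node with children cs: max of lower bounds of the
  other children (-infinity if there are none).\<close>
definition tau :: "gtree list \<Rightarrow> nat \<Rightarrow> ereal" where
  "tau cs i = Sup {ereal (Vlo (cs ! j)) | j. j < length cs \<and> j \<noteq> i}"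

definition beta :: "player \<Rightarrow> gtree list \<Rightarrow> nat \<Rightarrow> ereal" where
  "beta p cs i = (if p = Follower then tau cs i else -\<infinity>)"

definition concave_e :: "(real \<Rightarrow> ereal) \<Rightarrow> bool" where
  "concave_e h \<longleftrightarrow> (\<forall>x. h x \<noteq> \<infinity>) \<and> convex {(x, t::real). ereal t \<le> h x}"

definition hull_op :: "(real \<Rightarrow> ereal) list \<Rightarrow> real \<Rightarrow> ereal" where
  "hull_op gs \<mu> = Inf {h \<mu> | h. concave_e h \<and> (\<forall>g\<in>set gs. \<forall>x. g x \<le> h x)}"

definition trunc :: "(real \<Rightarrow> ereal) \<Rightarrow> ereal \<Rightarrow> real \<Rightarrow> ereal" where
  "trunc g t \<mu> = (if t \<le> ereal \<mu> then g \<mu> else -\<infinity>)"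

definition step :: "player \<Rightarrow> gtree list \<Rightarrow> (real \<Rightarrow> ereal) list \<Rightarrow> real \<Rightarrow> ereal" where
  "step p cs Fs = hull_op (map (\<lambda>i. trunc (Fs ! i) (beta p cs i)) [0..<length cs])"

definition leafEPF :: "real \<Rightarrow> real \<Rightarrow> real \<Rightarrow> ereal" where
  "leafEPF r1 r2 \<mu> = (if \<mu> = r2 then ereal r1 else -\<infinity>)"

fun U :: "gtree \<Rightarrow> real \<Rightarrow> ereal" where
  "U (Leaf r1 r2) = leafEPF r1 r2"
| "U (Node p cs) = step p cs (map U cs)"

fun U' :: "gtree \<Rightarrow> real \<Rightarrow> ereal" where
  "U' (Leaf r1 r2) = U (Leaf r1 r2)"
| "U' (Node p cs) = step p cs (map U cs)"

definition pwl_interp :: "real \<Rightarrow> real \<Rightarrow> (real \<Rightarrow> ereal) \<Rightarrow> bool" where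
  "pwl_interp lo hi f \<longleftrightarrow>
     (\<exists>pts :: (real \<times> real) list.
        pts \<noteq> [] \<and> sorted_wrt (<) (map fst pts) \<and>
        fst (hd pts) = lo \<and> fst (last pts) = hi \<and>
        (\<forall>k<length pts. f (fst (pts ! k)) = ereal (snd (pts ! k))) \<and>
        (\<forall>k. Suc k < length pts \<longrightarrow>
            (\<forall>\<mu>. fst (pts ! k) \<le> \<mu> \<and> \<mu> \<le> fst (pts ! Suc k) \<longrightarrow>
               f \<mu> = ereal (snd (pts ! k) + (\<mu> - fst (pts ! k)) / (fst (pts ! Suc k) - fst (pts ! k))
                                           * (snd (pts ! Suc k) - snd (pts ! k))))) \<and>
        (\<forall>\<mu>. (\<mu> < lo \<or> hi < \<mu>) \<longrightarrow> f \<mu> = -\<infinity>))"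

definition learned_EPFs :: "gtree \<Rightarrow> (nat list \<Rightarrow> real \<Rightarrow> ereal) \<Rightarrow> bool" where
  "learned_EPFs t Ut \<longleftrightarrow>
     (\<forall>q s. subtree t q = Some s \<longrightarrow>
        (case s of Leaf r1 r2 \<Rightarrow> Ut q = U (Leaf r1 r2)
                 | Node p cs \<Rightarrow> pwl_interp (Vlo s) (Vhi s) (Ut q)))"

definition learned_target :: "gtree \<Rightarrow> (nat list \<Rightarrow> real \<Rightarrow> ereal) \<Rightarrow> nat list \<Rightarrow> real \<Rightarrow> ereal" where
  "learned_target t Ut q =
     (case subtree t q of
        Some (Node p cs) \<Rightarrow> step p cs (map (\<lambda>i. Ut (q @ [i])) [0..<length cs])
      | _ \<Rightarrow> Ut q)"

definition Dom :: "(real \<Rightarrow> ereal) \<Rightarrow> real set" where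
  "Dom h = {\<mu>. h \<mu> > -\<infinity>}"

end

theory Submission
  imports Defs
begin

definition goodF :: "(real \<Rightarrow> ereal) \<Rightarrow> gtree \<Rightarrow> bool" where
  "goodF F c \<longleftrightarrow> Dom F = {Vlo c..Vhi c} \<and> (\<exists>M. \<forall>x. F x \<le> ereal M)"

lemma hull_dom:
  assumes bnd: "\<forall>g\<in>set gs. \<forall>x. g x \<le> ereal M"
    and sub: "\<forall>g\<in>set gs. Dom g \<subseteq> {a..b}"
    and g1: "g1 \<in> set gs" "a \<in> Dom g1" and g2: "g2 \<in> set gs" "b \<in> Dom g2"
    and ab: "a \<le> b"
  shows "Dom (hull_op gs) = {a..b} \<and> (\<forall>x. hull_op gs x \<le> ereal M)"
proof -
  define h0 where "h0 = (\<lambda>x. if a \<le> x \<and> x \<le> b then ereal M else -\<infinity>)"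
  have hyp: "{(x, t::real). ereal t \<le> h0 x} = {a..b} \<times> {..M}"
    by (auto simp: h0_def split: if_splits)
  have conc: "concave_e h0"
    unfolding concave_e_def hyp by (auto simp: h0_def convex_Times)
  have maj: "\<forall>g\<in>set gs. \<forall>x. g x \<le> h0 x"
  proof (intro ballI allI)
    fix g x assume g: "g \<in> set gs"
    show "g x \<le> h0 x"
    proof (cases "a \<le> x \<and> x \<le> b")
      case True thus ?thesis using bnd g by (simp add: h0_def)
    next
      case False
      hence "x \<notin> Dom g" using sub g by fastforce
      hence "g x = -\<infinity>" by (simp add: Dom_def)
      thus ?thesis by simp
    qed
  qed
  have le0: "hull_op gs x \<le> h0 x" for x
    unfolding hull_op_def using conc maj by (intro Inf_lower) blast
  obtain ya where ya: "g1 a = ereal ya"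
  proof -
    have "g1 a \<le> ereal M" using g1 bnd by blast
    moreover have "g1 a > -\<infinity>" using g1 by (simp add: Dom_def)
    ultimately show ?thesis using that by (cases "g1 a") auto
  qed
  obtain yb where yb: "g2 b = ereal yb"
  proof -
    have "g2 b \<le> ereal M" using g2 bnd by blast
    moreover have "g2 b > -\<infinity>" using g2 by (simp add: Dom_def)
    ultimately show ?thesis using that by (cases "g2 b") auto
  qed
  have inside: "hull_op gs x \<ge> ereal (min ya yb)" if x: "a \<le> x" "x \<le> b" for x
    unfolding hull_op_def
  proof (rule Inf_greatest, clarify)
    fix h assume hc: "concave_e h" and hm: "\<forall>g\<in>set gs. \<forall>x. g x \<le> h x"
    have ha: "ereal ya \<le> h a" using hm g1 ya by metis
    have hb: "ereal yb \<le> h b" using hm g2 yb by metis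
    show "ereal (min ya yb) \<le> h x"
    proof (cases "a = b")
      case True
      hence "x = a" using x by simp
      thus ?thesis using ha by (meson dual_order.trans ereal_less_eq(3) min.cobounded1)
    next
      case False
      hence ab': "a < b" using ab by simp
      define u where "u = (b - x) / (b - a)"
      define v where "v = (x - a) / (b - a)"
      have u0: "u \<ge> 0" "v \<ge> 0" "u + v = 1" using ab' x
        unfolding u_def v_def
        by (auto simp: add_divide_distrib[symmetric])
      have xe: "u * a + v * b = x"
      proof -
        have "b - a \<noteq> 0" using ab' by simp
        hence "u * a + v * b = ((b - x) * a + (x - a) * b) / (b - a)"
          by (simp add: u_def v_def add_divide_distrib)
        also have "(b - x) * a + (x - a) * b = x * (b - a)" by (simp add: algebra_simps)
        finally show ?thesis using \<open>b - a \<noteq> 0\<close> by simp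
      qed
      have cv: "convex {(x, t::real). ereal t \<le> h x}" using hc by (simp add: concave_e_def)
      have "u *\<^sub>R (a, ya) + v *\<^sub>R (b, yb) \<in> {(x, t::real). ereal t \<le> h x}"
        using cv ha hb u0 by (intro convexD[OF cv]) auto
      hence "ereal (u * ya + v * yb) \<le> h x" using xe by simp
      moreover have "min ya yb \<le> u * ya + v * yb"
      proof -
        have "u * min ya yb \<le> u * ya" "v * min ya yb \<le> v * yb"
          using u0 by (auto intro: mult_left_mono)
        hence "(u + v) * min ya yb \<le> u * ya + v * yb" by (simp add: distrib_right)
        thus ?thesis using u0 by simp
      qed
      ultimately show ?thesis by (meson dual_order.trans ereal_less_eq(3))
    qed
  qed
  have "Dom (hull_op gs) = {a..b}"
  proof
    show "Dom (hull_op gs) \<subseteq> {a..b}"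
    proof
      fix x assume "x \<in> Dom (hull_op gs)"
      hence "hull_op gs x > -\<infinity>" by (simp add: Dom_def)
      moreover have "hull_op gs x \<le> h0 x" by (rule le0)
      ultimately show "x \<in> {a..b}" by (auto simp: h0_def split: if_splits)
    qed
  next
    show "{a..b} \<subseteq> Dom (hull_op gs)"
    proof
      fix x assume "x \<in> {a..b}"
      hence "hull_op gs x \<ge> ereal (min ya yb)" using inside by auto
      thus "x \<in> Dom (hull_op gs)" unfolding Dom_def
        by (metis MInfty_neq_ereal(2) ereal_infty_less(2) mem_Collect_eq order_less_le_trans)
    qed
  qed
  moreover have "hull_op gs x \<le> ereal M" for x
    using le0[of x] by (auto simp: h0_def split: if_splits)
  ultimately show ?thesis by blast
qed

lemma interp_le: "0 \<le> (l::real) \<Longrightarrow> l \<le> 1 \<Longrightarrow> y + l * (z - y) \<le> max y z"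
proof (cases "y \<le> z")
  case True
  assume "0 \<le> l" "l \<le> 1"
  hence "l * (z - y) \<le> 1 * (z - y)" using True by (intro mult_right_mono) auto
  thus ?thesis using True by simp
next
  case False
  assume "0 \<le> l" "l \<le> 1"
  hence "l * (z - y) \<le> 0" using False by (simp add: mult_nonneg_nonpos)
  thus ?thesis by simp
qed

lemma pwl_good:
  assumes "pwl_interp lo hi f"
  shows "Dom f = {lo..hi} \<and> (\<exists>M. \<forall>x. f x \<le> ereal M)"
proof -
  obtain pts :: "(real \<times> real) list" where ne: "pts \<noteq> []" and srt: "sorted_wrt (<) (map fst pts)"
    and hd: "fst (hd pts) = lo" and lst: "fst (last pts) = hi"
    and pt: "\<forall>k<length pts. f (fst (pts ! k)) = ereal (snd (pts ! k))"
    and seg: "\<forall>k. Suc k < length pts \<longrightarrow>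
            (\<forall>\<mu>. fst (pts ! k) \<le> \<mu> \<and> \<mu> \<le> fst (pts ! Suc k) \<longrightarrow>
               f \<mu> = ereal (snd (pts ! k) + (\<mu> - fst (pts ! k)) / (fst (pts ! Suc k) - fst (pts ! k))
                                           * (snd (pts ! Suc k) - snd (pts ! k))))"
    and out: "\<forall>\<mu>. (\<mu> < lo \<or> hi < \<mu>) \<longrightarrow> f \<mu> = -\<infinity>"
    using assms unfolding pwl_interp_def by blast
  define M where "M = Max (set (map snd pts))"
  have sM: "k < length pts \<Longrightarrow> snd (pts ! k) \<le> M" for k
    unfolding M_def by (intro Max_ge) auto
  have h0: "fst (pts ! 0) = lo" using hd ne by (simp add: hd_conv_nth)
  have hl: "fst (pts ! (length pts - 1)) = hi" using lst ne by (simp add: last_conv_nth)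
  have inside: "\<exists>y. f x = ereal y \<and> y \<le> M" if x: "lo \<le> x" "x \<le> hi" for x
  proof -
    define K where "K = {k. k < length pts \<and> fst (pts ! k) \<le> x}"
    have finK: "finite K" unfolding K_def by simp
    have "0 \<in> K" using ne h0 x unfolding K_def by simp
    hence KK: "K \<noteq> {}" by blast
    define k where "k = Max K"
    have kK: "k \<in> K" unfolding k_def using finK KK by (rule Max_in)
    hence kl: "k < length pts" and kx: "fst (pts ! k) \<le> x" unfolding K_def by auto
    show ?thesis
    proof (cases "Suc k < length pts")
      case False
      hence "k = length pts - 1" using kl by simp
      hence "fst (pts ! k) = x" using kx hl x by simp
      moreover have "f (fst (pts ! k)) = ereal (snd (pts ! k))" using pt kl by blast
      ultimately show ?thesis using sM[OF kl] by auto
    next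
      case True
      have "Suc k \<notin> K"
      proof
        assume "Suc k \<in> K"
        hence "Suc k \<le> k" unfolding k_def using finK Max_ge by blast
        thus False by simp
      qed
      hence xs: "x < fst (pts ! Suc k)" using True unfolding K_def by auto
      have lt: "fst (pts ! k) < fst (pts ! Suc k)"
        using sorted_wrt_nth_less[OF srt, of k "Suc k"] True by simp
      define l where "l = (x - fst (pts ! k)) / (fst (pts ! Suc k) - fst (pts ! k))"
      have l0: "0 \<le> l" "l \<le> 1" using lt kx xs unfolding l_def
        by (simp_all add: divide_nonneg_nonneg divide_le_eq_1)
      have "f x = ereal (snd (pts ! k) + l * (snd (pts ! Suc k) - snd (pts ! k)))"
        using seg[rule_format, OF True, of x] kx xs unfolding l_def by simp
      moreover have "snd (pts ! k) + l * (snd (pts ! Suc k) - snd (pts ! k)) \<le> M"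
        using interp_le[OF l0, of "snd (pts ! k)" "snd (pts ! Suc k)"] sM[OF kl] sM[OF True] by simp
      ultimately show ?thesis by blast
    qed
  qed
  have "Dom f = {lo..hi}"
  proof (intro set_eqI iffI)
    fix x assume "x \<in> Dom f" thus "x \<in> {lo..hi}" using out unfolding Dom_def by (metis atLeastAtMost_iff linorder_not_le mem_Collect_eq order_less_irrefl)
  next
    fix x assume "x \<in> {lo..hi}" thus "x \<in> Dom f" using inside[of x] unfolding Dom_def by auto
  qed
  moreover have "f x \<le> ereal M" for x
    using inside[of x] out by (cases "lo \<le> x \<and> x \<le> hi") auto
  ultimately show ?thesis by blast
qed


lemma Vlo_le_Vhi: "wf_tree s \<Longrightarrow> Vlo s \<le> Vhi s"
proof (induction s rule: Vlo.induct)
  case (1 r1 r2) thus ?case by simp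
next
  case (2 cs)
  then obtain c where c: "c \<in> set cs" by (cases cs) auto
  have "Min (set (map Vlo cs)) \<le> Vlo c" using c by (intro Min_le) auto
  also have "Vlo c \<le> Vhi c" using 2 c by simp
  also have "Vhi c \<le> Max (set (map Vhi cs))" using c by (intro Max_ge) auto
  finally show ?case by simp
next
  case (3 cs)
  have "Max (set (map Vlo cs)) \<in> set (map Vlo cs)" using 3 by (intro Max_in) auto
  then obtain c where c: "c \<in> set cs" "Max (set (map Vlo cs)) = Vlo c" by auto
  have "Vlo c \<le> Vhi c" using 3 c by simp
  also have "Vhi c \<le> Max (set (map Vhi cs))" using c by (intro Max_ge) auto
  finally show ?case using c by simp
qed

lemma subtree_wf: "subtree t q = Some s \<Longrightarrow> wf_tree t \<Longrightarrow> wf_tree s"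
  by (induction t q rule: subtree.induct) (auto split: if_splits)

lemma subtree_append: "subtree t q = Some s \<Longrightarrow> subtree t (q @ r) = subtree s r"
  by (induction t q rule: subtree.induct) (auto split: if_splits)

lemma dom_trunc: "Dom (trunc g b) = {x \<in> Dom g. b \<le> ereal x}"
  unfolding Dom_def trunc_def by auto

lemma step_good:
  assumes ne: "cs \<noteq> []" and len: "length Fs = length cs"
    and good: "\<forall>i<length cs. goodF (Fs!i) (cs!i)"
    and lehi: "\<forall>i<length cs. Vlo (cs!i) \<le> Vhi (cs!i)"
  shows "goodF (step p cs Fs) (Node p cs)"
proof -
  define n where "n = length cs"
  define gs where "gs = map (\<lambda>i. trunc (Fs!i) (beta p cs i)) [0..<n]"
  have st: "step p cs Fs = hull_op gs" unfolding step_def gs_def n_def by simp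
  have setgs: "set gs = (\<lambda>i. trunc (Fs!i) (beta p cs i)) ` {0..<n}" by (simp add: gs_def)
  have dF: "i < n \<Longrightarrow> Dom (Fs!i) = {Vlo (cs!i)..Vhi (cs!i)}" for i
    using good unfolding goodF_def n_def by blast
  have "\<forall>i. \<exists>M. i < n \<longrightarrow> (\<forall>x. (Fs!i) x \<le> ereal M)"
    using good unfolding goodF_def n_def by blast
  then obtain Mf where Mf: "\<And>i x. i < n \<Longrightarrow> (Fs!i) x \<le> ereal (Mf i)" by metis
  define M where "M = Max (Mf ` {0..<n})"
  have MM: "i < n \<Longrightarrow> Mf i \<le> M" for i unfolding M_def by (intro Max_ge) auto
  define a where "a = Vlo (Node p cs)"
  define b where "b = Vhi (Node p cs)"
  have bdef: "b = Max (Vhi ` set cs)" unfolding b_def by simp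
  have hib: "i < n \<Longrightarrow> Vhi (cs!i) \<le> b" for i unfolding bdef n_def by (intro Max_ge) auto
  have "b \<in> Vhi ` set cs" unfolding bdef using ne by (intro Max_in) auto
  then obtain kb where kb: "kb < n" "Vhi (cs!kb) = b" unfolding n_def by (metis imageE in_set_conv_nth)
  have bnd: "\<forall>g\<in>set gs. \<forall>x. g x \<le> ereal M"
  proof (intro ballI allI)
    fix g x assume "g \<in> set gs"
    then obtain i where i: "i < n" "g = trunc (Fs!i) (beta p cs i)" using setgs by auto
    have "(Fs!i) x \<le> ereal M" using Mf[OF i(1)] MM[OF i(1)] by (meson ereal_less_eq(3) order_trans)
    thus "g x \<le> ereal M" using i by (simp add: trunc_def)
  qed
  have tau_up: "i < n \<Longrightarrow> j < n \<Longrightarrow> j \<noteq> i \<Longrightarrow> ereal (Vlo (cs!j)) \<le> tau cs i" for i j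
    unfolding tau_def n_def by (intro Sup_upper) auto
  have tau_le: "(\<And>j. j < n \<Longrightarrow> j \<noteq> i \<Longrightarrow> Vlo (cs!j) \<le> c) \<Longrightarrow> tau cs i \<le> ereal c" for i c
    unfolding tau_def n_def by (intro Sup_least) auto
  obtain ka where ka: "ka < n" "Vlo (cs!ka) = a" "beta p cs ka \<le> ereal a"
    and alo: "\<And>i x. i < n \<Longrightarrow> x \<in> Dom (trunc (Fs!i) (beta p cs i)) \<Longrightarrow> a \<le> x"
  proof (cases p)
    case Leader
    have adef: "a = Min (Vlo ` set cs)" unfolding a_def Leader by simp
    have "a \<in> Vlo ` set cs" unfolding adef using ne by (intro Min_in) auto
    then obtain k where k: "k < n" "Vlo (cs!k) = a" unfolding n_def by (metis imageE in_set_conv_nth)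
    have "a \<le> x" if "i < n" "x \<in> Dom (trunc (Fs!i) (beta p cs i))" for i x
    proof -
      have "a \<le> Vlo (cs!i)" unfolding adef using that(1) n_def by (intro Min_le) auto
      moreover have "Vlo (cs!i) \<le> x" using that dF[OF that(1)] dom_trunc by auto
      ultimately show ?thesis by simp
    qed
    moreover have "beta p cs k \<le> ereal a" using Leader by (simp add: beta_def)
    ultimately show ?thesis using that k by blast
  next
    case Follower
    have adef: "a = Max (Vlo ` set cs)" unfolding a_def Follower by simp
    have alo: "i < n \<Longrightarrow> Vlo (cs!i) \<le> a" for i unfolding adef n_def by (intro Max_ge) auto
    have "a \<in> Vlo ` set cs" unfolding adef using ne by (intro Max_in) auto
    then obtain k where k: "k < n" "Vlo (cs!k) = a" unfolding n_def by (metis imageE in_set_conv_nth)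
    have "a \<le> x" if "i < n" "x \<in> Dom (trunc (Fs!i) (beta p cs i))" for i x
    proof (cases "i = k")
      case True thus ?thesis using that dF[OF that(1)] dom_trunc k by auto
    next
      case False
      have "ereal a \<le> tau cs i" using tau_up[OF that(1) k(1)] False k by simp
      moreover have "beta p cs i \<le> ereal x" using that dom_trunc by auto
      moreover have "beta p cs i = tau cs i" using Follower by (simp add: beta_def)
      ultimately have "ereal a \<le> ereal x" by (metis order_trans)
      thus ?thesis by simp
    qed
    moreover have "beta p cs k \<le> ereal a" using Follower tau_le[of k a] alo by (simp add: beta_def)
    ultimately show ?thesis using that k by blast
  qed
  have betab: "beta p cs kb \<le> ereal b"
  proof (cases p)
    case Leader thus ?thesis by (simp add: beta_def)
  next
    case Follower
    have "tau cs kb \<le> ereal b"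
      using tau_le[of kb b] lehi hib unfolding n_def by (meson order_trans)
    thus ?thesis using Follower by (simp add: beta_def)
  qed
  have ab: "a \<le> b" using ka lehi hib n_def by (metis order_trans)
  have sub: "\<forall>g\<in>set gs. Dom g \<subseteq> {a..b}"
  proof (intro ballI subsetI)
    fix g x assume "g \<in> set gs" "x \<in> Dom g"
    then obtain i where i: "i < n" "g = trunc (Fs!i) (beta p cs i)" using setgs by auto
    have "x \<le> Vhi (cs!i)" using i \<open>x \<in> Dom g\<close> dF[OF i(1)] dom_trunc by auto
    thus "x \<in> {a..b}" using hib[OF i(1)] alo[OF i(1)] i \<open>x \<in> Dom g\<close> by auto
  qed
  have g1: "trunc (Fs!ka) (beta p cs ka) \<in> set gs" "a \<in> Dom (trunc (Fs!ka) (beta p cs ka))"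
    using ka setgs dF[OF ka(1)] dom_trunc lehi n_def by auto
  have g2: "trunc (Fs!kb) (beta p cs kb) \<in> set gs" "b \<in> Dom (trunc (Fs!kb) (beta p cs kb))"
    using kb setgs dF[OF kb(1)] dom_trunc lehi n_def betab by auto
  have "Dom (hull_op gs) = {a..b} \<and> (\<forall>x. hull_op gs x \<le> ereal M)"
    by (rule hull_dom[OF bnd sub g1 g2 ab])
  thus ?thesis unfolding goodF_def st a_def b_def by blast
qed


lemma leaf_good: "goodF (U (Leaf r1 r2)) (Leaf r1 r2)"
  unfolding goodF_def Dom_def by (auto simp: leafEPF_def intro!: exI[of _ r1])

lemma U_good: "wf_tree s \<Longrightarrow> goodF (U s) s"
proof (induction s)
  case (Leaf r1 r2) show ?case by (rule leaf_good)
next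
  case (Node p cs)
  have "goodF (step p cs (map U cs)) (Node p cs)"
  proof (rule step_good)
    show "cs \<noteq> []" using Node by simp
    show "length (map U cs) = length cs" by simp
    show "\<forall>i<length cs. goodF (map U cs ! i) (cs ! i)" using Node by simp
    show "\<forall>i<length cs. Vlo (cs ! i) \<le> Vhi (cs ! i)" using Node by (simp add: Vlo_le_Vhi)
  qed
  thus ?case by simp
qed

lemma Ut_good:
  assumes "wf_tree t" "learned_EPFs t Ut" "subtree t q = Some s"
  shows "goodF (Ut q) s"
proof (cases s)
  case (Leaf r1 r2)
  hence "Ut q = U (Leaf r1 r2)" using assms unfolding learned_EPFs_def by fastforce
  thus ?thesis using Leaf leaf_good by simp
next
  case (Node p cs)
  hence "pwl_interp (Vlo s) (Vhi s) (Ut q)" using assms unfolding learned_EPFs_def by fastforce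
  thus ?thesis using pwl_good unfolding goodF_def by blast
qed

theorem lemma1:
  fixes t :: gtree and Ut :: "nat list \<Rightarrow> real \<Rightarrow> ereal" and q :: "nat list" and s :: gtree
  assumes "wf_tree t"
    and "learned_EPFs t Ut"
    and "subtree t q = Some s"
  shows "Dom (U s) = {Vlo s..Vhi s} \<and> Dom (U' s) = {Vlo s..Vhi s}
       \<and> Dom (Ut q) = {Vlo s..Vhi s} \<and> Dom (learned_target t Ut q) = {Vlo s..Vhi s}"
proof -
  have ws: "wf_tree s" using subtree_wf assms by blast
  have u: "goodF (U s) s" using U_good ws by blast
  have u': "U' s = U s" by (cases s) auto
  have ut: "goodF (Ut q) s" using Ut_good assms by blast
  have lt: "goodF (learned_target t Ut q) s"
  proof (cases s)
    case (Leaf r1 r2)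
    thus ?thesis using ut assms(3) by (simp add: learned_target_def)
  next
    case (Node p cs)
    define Fs where "Fs = map (\<lambda>i. Ut (q @ [i])) [0..<length cs]"
    have lt: "learned_target t Ut q = step p cs Fs"
      using assms(3) Node by (simp add: learned_target_def Fs_def)
    have "goodF (step p cs Fs) (Node p cs)"
    proof (rule step_good)
      show "cs \<noteq> []" using ws Node by simp
      show "length Fs = length cs" by (simp add: Fs_def)
      show "\<forall>i<length cs. goodF (Fs ! i) (cs ! i)"
      proof (intro allI impI)
        fix i assume i: "i < length cs"
        have "subtree t (q @ [i]) = Some (cs ! i)"
          using subtree_append[OF assms(3)] Node i by simp
        hence "goodF (Ut (q @ [i])) (cs ! i)" using Ut_good assms(1,2) by blast
        thus "goodF (Fs ! i) (cs ! i)" using i by (simp add: Fs_def)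
      qed
      show "\<forall>i<length cs. Vlo (cs ! i) \<le> Vhi (cs ! i)" using ws Node by (simp add: Vlo_le_Vhi)
    qed
    thus ?thesis using lt Node by simp
  qed
  show ?thesis using u u' ut lt unfolding goodF_def by simp
qed

end
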